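(* There is an absolute constant $a_2>0$ such that for all integers $k\ge 80$, $n\ge 2k$ and every positive integer $m\le\frac{\ln k}{4}$, $$\int_{[0,n]^m}\psi\Big(\max_{i\in[m]}x_i-\frac1k\Big)\,dx\le 1+\frac{a_2^m}{k},$$ where $\psi(\gamma)=1$ for $\gamma<1$, $\psi(\gamma)=\frac2k$ for $\gamma\in[1,50]$, and $\psi(\gamma)=4k\,e^{-\frac{\gamma}{20}\ln k}$ for $\gamma>50$. *)

theory Defs
  imports "HOL-Analysis.Analysis"
begin

definition psi :: "nat \<Rightarrow> real \<Rightarrow> real" where
  "psi k \<gamma> = (if \<gamma> < 1 then 1
               else if \<gamma> \<le> 50 then 2 / real k
               else 4 * real k * exp (- (\<gamma> / 20) * ln (real k)))"

end

theory Submission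
  imports Defs "HOL-Real_Asymp.Real_Asymp"
begin

lemma exp_int: "(\<integral>\<^sup>+y. ennreal (exp (- y / 250)) * indicator {0..} y \<partial>lborel) = ennreal 250"
proof -
  have "(\<integral>\<^sup>+y. ennreal (exp (- y / 250)) * indicator {0..} y \<partial>lborel) = ennreal (0 - (- 250 * exp (- 0 / 250)))"
    apply (rule nn_integral_FTC_atLeast[where F="\<lambda>y. - 250 * exp (- y / 250)"])
       apply simp
      apply (auto intro!: derivative_eq_intros)[1]
     apply simp
    apply real_asymp
    done
  then show ?thesis by simp
qed

interpretation P: product_sigma_finite "\<lambda>_::nat. lborel :: real measure"
  by standard

lemma bern: "0 \<le> (x::real) \<Longrightarrow> x \<le> 1 \<Longrightarrow> (1 + x) ^ m \<le> 1 + x * (2 ^ m - 1)"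
proof (induction m)
  case 0 then show ?case by simp
next
  case (Suc m)
  have "(1 + x) ^ Suc m = (1+x) * (1+x)^m" by simp
  also have "\<dots> \<le> (1+x) * (1 + x * (2 ^ m - 1))" using Suc by (intro mult_left_mono) auto
  also have "\<dots> = 1 + x * (2^m - 1) + x + (x*x) * (2^m - 1)" by (simp add: algebra_simps)
  also have "\<dots> \<le> 1 + x * (2^m - 1) + x + x * (2^m - 1)"
  proof -
    have "x * x \<le> x" using Suc.prems by (simp add: mult_left_le)
    moreover have "(0::real) \<le> 2^m - 1" by simp
    ultimately show ?thesis by (simp add: mult_right_mono)
  qed
  also have "\<dots> = 1 + x * (2 ^ Suc m - 1)" by (simp add: algebra_simps)
  finally show ?case .
qed

lemma aux: "(a::real) \<le> 0 \<Longrightarrow> a = 2*L + L/1000 + P/1000 - P/20 \<Longrightarrow> S \<le> L/4 + P/4 \<Longrightarrow> L - P/20 \<le> -L - S/250"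
  by linarith

lemma pointwise:
  fixes x :: "nat \<Rightarrow> real"
  assumes k: "k \<ge> 80" and m1: "m \<ge> 1" and mk: "real m \<le> ln (real k) / 4"
    and xP: "x \<in> PiE {..<m} (\<lambda>_. {0..b})"
  shows "psi k (Max (x ` {..<m}) - 1 / real k) \<le>
     indicator (PiE {..<m} (\<lambda>_. {0..1 + 1/real k})) x
     + 2 / real k * indicator (PiE {..<m} (\<lambda>_. {0..51})) x
     + 4 / real k * exp (- (\<Sum>i<m. x i) / 250)"
proof -
  have x: "0 \<le> x i" if "i < m" for i using xP that by (auto simp: PiE_iff)
  have xe: "x \<in> extensional {..<m}" using xP by (auto simp: PiE_iff)
  define M where "M = Max (x ` {..<m})"
  define g where "g = M - 1 / real k"
  have kpos: "real k > 0" using k by simp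
  have fin: "finite (x ` {..<m})" and ne: "x ` {..<m} \<noteq> {}" using m1 by (auto simp: lessThan_empty_iff)
  have le: "x i \<le> M" if "i < m" for i unfolding M_def using fin that by (intro Max_ge) auto
  have k1: "1 / real k \<le> 1" using k by simp
  have ind_ge: "0 \<le> (indicator A x :: real)" for A :: "(nat \<Rightarrow> real) set" by simp
  have e_ge: "0 \<le> 4 / real k * exp (- (\<Sum>i<m. x i) / 250)" using kpos by simp
  have i2: "0 \<le> 2 / real k * indicator (PiE {..<m} (\<lambda>_. {0..51::real})) x" using kpos by simp
  show ?thesis
  proof (cases "g < 1")
    case True
    have "x \<in> PiE {..<m} (\<lambda>_. {0..1 + 1/real k})"
      using xe x le True unfolding g_def by (force simp: PiE_iff)
    then show ?thesis using True i2 e_ge unfolding psi_def M_def[symmetric] g_def[symmetric] by simp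
  next
    case F1: False
    show ?thesis
    proof (cases "g \<le> 50")
      case True
      have "x \<in> PiE {..<m} (\<lambda>_. {0..51})"
        using xe x le True k1 unfolding g_def by (force simp: PiE_iff)
      then show ?thesis using F1 True e_ge ind_ge unfolding psi_def M_def[symmetric] g_def[symmetric] by simp
    next
      case False
      define L where "L = ln (real k)"
      have L4: "L \<ge> 0" unfolding L_def using k by simp
      have S: "(\<Sum>i<m. x i) \<le> real m * M"
        using sum_mono[of "{..<m}" x "\<lambda>_. M"] le by simp
      have M0: "M \<ge> 0" using le[of 0] x[of 0] m1 by simp
      have "(\<Sum>i<m. x i) \<le> (L/4) * (g + 1)"
      proof -
        have "real m * M \<le> (L/4) * M" using mk M0 unfolding L_def by (intro mult_right_mono) auto
        moreover have "M \<le> g + 1" using k1 unfolding g_def by simp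
        moreover have "(L/4) * M \<le> (L/4) * (g + 1)" using \<open>M \<le> g + 1\<close> L4 by (intro mult_left_mono) auto
        ultimately show ?thesis using S by linarith
      qed
      hence key: "L - g/20*L \<le> - L - (\<Sum>i<m. x i) / 250"
      proof -
        assume h: "(\<Sum>i<m. x i) \<le> (L/4) * (g + 1)"
        have "L * (2 + (g+1)/1000 - g/20) \<le> 0"
          using False L4 by (intro mult_nonneg_nonpos) (auto simp: field_simps)
        moreover have "L * (2 + (g+1)/1000 - g/20) = 2*L + L/1000 + (L*g)/1000 - (L*g)/20"
          by (simp add: algebra_simps add_divide_distrib diff_divide_distrib)
        moreover have "(L/4) * (g + 1) = L/4 + (L*g)/4" by (simp add: algebra_simps)
        moreover have "g/20*L = (L*g)/20" by simp
        ultimately have "L - (L*g)/20 \<le> -L - (\<Sum>i<m. x i)/250"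
          using h by (intro aux[of "L * (2 + (g+1)/1000 - g/20)" L "L*g" "\<Sum>i<m. x i"]) auto
        then show ?thesis by (simp add: mult.commute)
      qed
      have kexp: "real k = exp L" unfolding L_def using kpos by simp
      have "psi k g = 4 * exp (L - g/20*L)"
      proof -
        have "exp (L - g/20*L) = exp L * exp (-(g/20)*L)" by (simp add: exp_add[symmetric])
        then show ?thesis using F1 False unfolding psi_def L_def[symmetric] kexp by simp
      qed
      also have "\<dots> \<le> 4 * exp (- L - (\<Sum>i<m. x i) / 250)" using key by simp
      also have "\<dots> = 4 / real k * exp (- (\<Sum>i<m. x i) / 250)"
      proof -
        have "exp (- L - (\<Sum>i<m. x i) / 250) = exp (-L) * exp (- (\<Sum>i<m. x i) / 250)"
          by (simp add: exp_add[symmetric])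
        moreover have "exp (-L) = 1 / real k" using kexp by (simp add: exp_minus inverse_eq_divide)
        ultimately show ?thesis by simp
      qed
      finally have "psi k g \<le> 4 / real k * exp (- (\<Sum>i<m. x i) / 250)" .
      moreover have "0 \<le> (indicator (PiE {..<m} (\<lambda>_. {0..1 + 1/real k})) x :: real)" by simp
      ultimately show ?thesis using i2 unfolding M_def[symmetric] g_def[symmetric] by linarith
    qed
  qed
qed

lemma real_ineq:
  assumes k: "k \<ge> (80::nat)" and m1: "m \<ge> 1"
  shows "(1 + 1 / real k) ^ m + 2 / real k * 51 ^ m + 4 / real k * 250 ^ m \<le> 1 + 3000 ^ m / real k"
proof -
  have kpos: "real k > 0" using k by simp
  have b: "(1 + 1 / real k) ^ m \<le> 1 + 1 / real k * (2 ^ m - 1)"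
    using k by (intro bern) auto
  have p1: "(2::real) ^ m \<le> 1000 ^ m" by (intro power_mono) auto
  have p2: "2 * (51::real) ^ m \<le> 1000 ^ m"
  proof -
    have "(2::real) \<le> 2 ^ m" using m1 power_increasing[of 1 m "2::real"] by simp
    hence "2 * (51::real) ^ m \<le> 2 ^ m * 51 ^ m" by (intro mult_right_mono) auto
    also have "\<dots> = 102 ^ m" by (simp add: power_mult_distrib[symmetric])
    also have "\<dots> \<le> 1000 ^ m" by (intro power_mono) auto
    finally show ?thesis .
  qed
  have p3: "4 * (250::real) ^ m \<le> 1000 ^ m"
  proof -
    have "(4::real) \<le> 4 ^ m" using m1 power_increasing[of 1 m "4::real"] by simp
    hence "4 * (250::real) ^ m \<le> 4 ^ m * 250 ^ m" by (intro mult_right_mono) auto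
    also have "\<dots> = 1000 ^ m" by (simp add: power_mult_distrib[symmetric])
    finally show ?thesis .
  qed
  have p4: "3 * (1000::real) ^ m \<le> 3000 ^ m"
  proof -
    have "(3::real) \<le> 3 ^ m" using m1 power_increasing[of 1 m "3::real"] by simp
    hence "3 * (1000::real) ^ m \<le> 3 ^ m * 1000 ^ m" by (intro mult_right_mono) auto
    also have "\<dots> = 3000 ^ m" by (simp add: power_mult_distrib[symmetric])
    finally show ?thesis .
  qed
  have "2 ^ m + 2 * 51 ^ m + 4 * 250 ^ m \<le> (3000::real) ^ m" using p1 p2 p3 p4 by linarith
  hence "(2 ^ m + 2 * 51 ^ m + 4 * 250 ^ m) / real k \<le> (3000::real) ^ m / real k"
    using kpos by (intro divide_right_mono) auto
  moreover have "(2 ^ m + 2 * 51 ^ m + 4 * 250 ^ m) / real k = 2 ^ m / real k + 2 / real k * 51 ^ m + 4 / real k * 250 ^ m"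
    by (simp add: add_divide_distrib)
  moreover have "1 / real k * (2 ^ m - 1) \<le> 2 ^ m / real k" using kpos by (simp add: divide_right_mono)
  ultimately have "1 / real k * (2 ^ m - 1) + 2 / real k * 51 ^ m + 4 / real k * 250 ^ m \<le> 3000 ^ m / real k"
    by linarith
  thus ?thesis using b by linarith
qed

theorem mainTheorem15:
  shows "\<exists>a2::real. a2 > 0 \<and>
    (\<forall>k n m :: nat. k \<ge> 80 \<longrightarrow> n \<ge> 2 * k \<longrightarrow> m \<ge> 1 \<longrightarrow>
       real m \<le> ln (real k) / 4 \<longrightarrow>
       (\<integral>\<^sup>+ x. ennreal (psi k (Max ((\<lambda>i. x i) ` {..<m}) - 1 / real k))
              * indicator (PiE {..<m} (\<lambda>_. {0..real n})) x
          \<partial>(PiM {..<m} (\<lambda>_. lborel)))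
       \<le> ennreal (1 + a2 ^ m / real k))"
proof (intro exI[of _ 3000] conjI allI impI)
  fix k n m :: nat
  assume k: "k \<ge> 80" and n: "n \<ge> 2 * k" and m1: "m \<ge> 1" and mk: "real m \<le> ln (real k) / 4"
  let ?N = "PiM {..<m} (\<lambda>_. lborel :: real measure)"
  define B where "B = (\<lambda>b::real. PiE {..<m} (\<lambda>_::nat. {0..b}))"
  define f where "f = (\<lambda>y::real. ennreal (exp (- y / 250)) * indicator {0..} y)"
  have kpos: "real k > 0" using k by simp
  have Bs[measurable]: "B b \<in> sets ?N" for b unfolding B_def by (intro sets_PiM_I_finite) auto
  have fm[measurable]: "f \<in> borel_measurable lborel" unfolding f_def by measurable
  have "(\<integral>\<^sup>+ x. ennreal (psi k (Max ((\<lambda>i. x i) ` {..<m}) - 1 / real k))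
              * indicator (PiE {..<m} (\<lambda>_. {0..real n})) x \<partial>?N)
     \<le> (\<integral>\<^sup>+ x. indicator (B (1 + 1/real k)) x + ennreal (2 / real k) * indicator (B 51) x
              + ennreal (4 / real k) * (\<Prod>i<m. f (x i)) \<partial>?N)"
  proof (intro nn_integral_mono)
    fix x :: "nat \<Rightarrow> real"
    show "ennreal (psi k (Max ((\<lambda>i. x i) ` {..<m}) - 1 / real k))
              * indicator (PiE {..<m} (\<lambda>_. {0..real n})) x
        \<le> indicator (B (1 + 1/real k)) x + ennreal (2 / real k) * indicator (B 51) x
              + ennreal (4 / real k) * (\<Prod>i<m. f (x i))"
    proof (cases "x \<in> PiE {..<m} (\<lambda>_. {0..real n})")
      case False then show ?thesis by simp
    next
      case True
      have x0: "0 \<le> x i" if "i < m" for i using True that by (auto simp: PiE_iff)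
      have "(\<Prod>i<m. f (x i)) = (\<Prod>i<m. ennreal (exp (- x i / 250)))"
        unfolding f_def using x0 by (intro prod.cong) auto
      also have "\<dots> = ennreal (\<Prod>i<m. exp (- x i / 250))" by (simp add: prod_ennreal)
      also have "(\<Prod>i<m. exp (- x i / 250)) = exp (- (\<Sum>i<m. x i) / 250)"
        by (simp add: exp_sum[symmetric] sum_negf sum_divide_distrib)
      finally have pr: "(\<Prod>i<m. f (x i)) = ennreal (exp (- (\<Sum>i<m. x i) / 250))" .
      have pw: "psi k (Max (x ` {..<m}) - 1 / real k) \<le>
         indicator (B (1 + 1/real k)) x + 2 / real k * indicator (B 51) x
         + 4 / real k * exp (- (\<Sum>i<m. x i) / 250)"
        unfolding B_def using pointwise[OF k m1 mk True] by simp
      have "ennreal (psi k (Max (x ` {..<m}) - 1 / real k)) \<le> ennreal (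
         indicator (B (1 + 1/real k)) x + 2 / real k * indicator (B 51) x
         + 4 / real k * exp (- (\<Sum>i<m. x i) / 250))" by (rule ennreal_leI[OF pw])
      also have "\<dots> = indicator (B (1 + 1/real k)) x + ennreal (2 / real k) * indicator (B 51) x
              + ennreal (4 / real k) * ennreal (exp (- (\<Sum>i<m. x i) / 250))"
      proof -
        have a: "0 \<le> (indicator (B (1 + 1/real k)) x :: real)" by simp
        have b: "0 \<le> 2 / real k * (indicator (B 51) x :: real)" using kpos by simp
        have c: "0 \<le> 4 / real k * exp (- (\<Sum>i<m. x i) / 250)" using kpos by simp
        have d: "0 \<le> 2 / real k" "0 \<le> 4 / real k" using kpos by auto
        show ?thesis
          unfolding ennreal_plus[OF add_nonneg_nonneg[OF a b] c] ennreal_plus[OF a b]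
            ennreal_mult'[OF d(1)] ennreal_mult'[OF d(2)] ennreal_indicator ..
      qed
      finally show ?thesis using True pr by simp
    qed
  qed
  also have "\<dots> = (\<integral>\<^sup>+ x. indicator (B (1 + 1/real k)) x \<partial>?N) + ennreal (2 / real k) * (\<integral>\<^sup>+ x. indicator (B 51) x \<partial>?N)
      + ennreal (4 / real k) * (\<integral>\<^sup>+ x. (\<Prod>i<m. f (x i)) \<partial>?N)"
    by (simp add: nn_integral_add nn_integral_cmult)
  also have "\<dots> = ennreal ((1 + 1 / real k) ^ m + 2 / real k * 51 ^ m + 4 / real k * 250 ^ m)"
  proof -
    have e: "emeasure ?N (B b) = ennreal b ^ m" if "b \<ge> 0" for b
      unfolding B_def using that by (subst P.emeasure_PiM) auto
    have p: "(\<integral>\<^sup>+ x. (\<Prod>i<m. f (x i)) \<partial>?N) = ennreal 250 ^ m"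
      using P.product_nn_integral_prod[of "{..<m}" "\<lambda>_. f"] exp_int unfolding f_def by simp
    have a: "0 \<le> (1 + 1 / real k) ^ m" "0 \<le> 2 / real k * 51 ^ m" "0 \<le> 4 / real k * 250 ^ m"
      "0 \<le> 2 / real k" "0 \<le> 4 / real k" "0 \<le> 1 + 1 / real k" using kpos by auto
    have q: "ennreal ((1 + 1 / real k) ^ m + 2 / real k * 51 ^ m + 4 / real k * 250 ^ m)
      = ennreal (1 + 1 / real k) ^ m + ennreal (2 / real k) * ennreal 51 ^ m + ennreal (4 / real k) * ennreal 250 ^ m"
      unfolding ennreal_plus[OF add_nonneg_nonneg[OF a(1) a(2)] a(3)] ennreal_plus[OF a(1) a(2)]
        ennreal_mult'[OF a(4)] ennreal_mult'[OF a(5)] ennreal_power[OF a(6)] ennreal_power[of 51] ennreal_power[of 250]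
      by (simp add: ennreal_power[of 51, simplified] ennreal_power[of 250, simplified])
    show ?thesis
      unfolding nn_integral_indicator[OF Bs] q p e[OF a(6)] e[of 51, simplified] by simp
  qed
  also have "\<dots> \<le> ennreal (1 + 3000 ^ m / real k)" by (intro ennreal_leI real_ineq k m1)
  finally show "(\<integral>\<^sup>+ x. ennreal (psi k (Max ((\<lambda>i. x i) ` {..<m}) - 1 / real k))
              * indicator (PiE {..<m} (\<lambda>_. {0..real n})) x \<partial>?N) \<le> ennreal (1 + 3000 ^ m / real k)" .
qed (simp)

end
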